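(* If $\phi$ is a Young function and $f:\mathbb{R}^{N}\rightarrow [0,\infty ]$, then $\widehat{\phi(f)}=\phi(\hat{f})$.
   Context: A Young function is a nonconstant $\phi:[0,\infty]\to[0,\infty]$ with $\phi(0)=0$, nondecreasing, convex and left continuous. Enclosing balls: for nonempty bounded $X\subset\mathbb{R}^N$, $\overline{B}_X$ is the unique closed ball of minimal diameter containing $X$; $\overline{B}_X:=\mathbb{R}^N$ if $X$ unbounded; $\overline{B}_\emptyset:=\{0\}$. For $f:\mathbb{R}^N\to[-\infty,\infty]$ and $\xi\in[-\infty,\infty]$, $\rho^+_f(\xi)\in[0,\infty]$ is the radius of $\overline{B}_{\{f>\xi\}}$, $\gamma^+_f(t):=\inf\{\xi:\rho^+_f(\xi)\le t\}$ for $t\in[0,\infty)$, and $\hat f(x):=\gamma^+_f(|x|)$. *)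

theory Defs
  imports "HOL-Analysis.Analysis" "HOL-Library.Extended_Nonnegative_Real"
begin

definition young_function :: "(ennreal \<Rightarrow> ennreal) \<Rightarrow> bool" where
  "young_function \<phi> \<longleftrightarrow>
     (\<exists>x y. \<phi> x \<noteq> \<phi> y) \<and>
     \<phi> 0 = 0 \<and>
     mono \<phi> \<and>
     (\<forall>x y (l::ennreal). l \<le> 1 \<longrightarrow> \<phi> (l * x + (1 - l) * y) \<le> l * \<phi> x + (1 - l) * \<phi> y) \<and>
     (\<forall>x. continuous (at_left x) \<phi>)"

definition enclosing_ball :: "'a::euclidean_space set \<Rightarrow> 'a set" where
  "enclosing_ball X =
     (if X = {} then {0}
      else if \<not> bounded X then UNIV
      else (THE B. (\<exists>c r. B = cball c r) \<and> X \<subseteq> B \<and>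
                   (\<forall>c r. X \<subseteq> cball c r \<longrightarrow> diameter B \<le> diameter (cball c r))))"

definition ball_radius :: "'a::euclidean_space set \<Rightarrow> ereal" where
  "ball_radius B = (if B = UNIV then \<infinity> else ereal (diameter B / 2))"

definition rho_plus :: "('a::euclidean_space \<Rightarrow> ereal) \<Rightarrow> ereal \<Rightarrow> ereal" where
  "rho_plus f \<xi> = ball_radius (enclosing_ball {x. f x > \<xi>})"

definition gamma_plus :: "('a::euclidean_space \<Rightarrow> ereal) \<Rightarrow> real \<Rightarrow> ereal" where
  "gamma_plus f t = Inf {\<xi>. rho_plus f \<xi> \<le> ereal t}"

definition sym_hat :: "('a::euclidean_space \<Rightarrow> ereal) \<Rightarrow> 'a \<Rightarrow> ereal" where
  "sym_hat f x = gamma_plus f (norm x)"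

end

theory Submission
  imports Defs begin

lemma chain_min:
  assumes "finite F'" "\<forall>A\<in>F. \<forall>B\<in>F. A \<subseteq> B \<or> B \<subseteq> A" "F' \<subseteq> F" "B \<in> F"
  shows "\<exists>M\<in>insert B F'. M \<subseteq> \<Inter>(insert B F')"
  using assms(1,3)
proof (induction F' rule: finite_induct)
  case empty then show ?case by simp
next
  case (insert A F'')
  have "F'' \<subseteq> F" using insert.prems by simp
  then obtain M where M: "M \<in> insert B F''" "M \<subseteq> \<Inter>(insert B F'')" using insert.IH by blast
  have AF: "A \<in> F" using insert.prems by simp
  have MF: "M \<in> F" using M(1) \<open>F'' \<subseteq> F\<close> assms(4) by blast
  have "A \<subseteq> M \<or> M \<subseteq> A" using assms(2) AF MF by blast
  then show ?case
  proof
    assume "A \<subseteq> M"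
    then have "A \<subseteq> \<Inter>(insert B (insert A F''))" using M(2) by auto
    then show ?thesis by blast
  next
    assume "M \<subseteq> A"
    then have "M \<subseteq> \<Inter>(insert B (insert A F''))" using M(2) by auto
    then show ?thesis using M(1) by blast
  qed
qed

lemma chain_inter_nonempty:
  fixes F :: "'a::heine_borel set set"
  assumes chain: "\<forall>A\<in>F. \<forall>B\<in>F. A \<subseteq> B \<or> B \<subseteq> A"
    and cl: "\<And>T. T \<in> F \<Longrightarrow> closed T"
    and ne: "\<And>T. T \<in> F \<Longrightarrow> T \<noteq> {}"
    and B: "B \<in> F" "bounded B"
  shows "\<Inter>F \<noteq> {}"
proof -
  have "compact B" using B cl by (simp add: compact_eq_bounded_closed)
  have "B \<inter> \<Inter>F \<noteq> {}"
  proof (rule compact_imp_fip[OF \<open>compact B\<close> cl])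
    fix F' assume "finite F'" "F' \<subseteq> F"
    from chain_min[OF this(1) chain this(2) B(1)] obtain M where
      "M \<in> insert B F'" "M \<subseteq> \<Inter>(insert B F')" by blast
    moreover have "M \<noteq> {}" using \<open>M \<in> insert B F'\<close> \<open>F' \<subseteq> F\<close> B ne by blast
    ultimately show "B \<inter> \<Inter>F' \<noteq> {}" by blast
  qed
  then show ?thesis by blast
qed

definition centers :: "'a::euclidean_space set \<Rightarrow> real \<Rightarrow> 'a set" where
  "centers X r = {c. X \<subseteq> cball c r}"

lemma closed_centers: "closed (centers X r)"
proof -
  have "centers X r = (\<Inter>x\<in>X. cball x r)"
    by (auto simp: centers_def dist_commute)
  then show ?thesis by auto
qed

lemma bounded_centers:
  assumes "x \<in> X" shows "bounded (centers X r)"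
proof -
  have "centers X r \<subseteq> cball x r" using assms by (auto simp: centers_def dist_commute)
  then show ?thesis using bounded_cball bounded_subset by blast
qed


lemma cball_r_nonneg:
  fixes c :: "'a::metric_space"
  assumes "x \<in> X" "X \<subseteq> cball c r" shows "0 \<le> r"
proof -
  have "dist c x \<le> r" using assms by auto
  then show ?thesis using zero_le_dist[of c x] by linarith
qed

lemma cball_mono_sub:
  fixes c :: "'a::metric_space"
  assumes "X \<subseteq> cball c r" "r \<le> t" shows "X \<subseteq> cball c t"
  using assms by (auto simp: subset_iff)

lemma par_law:
  fixes a b :: "'a::real_inner"
  shows "norm (a+b)^2 + norm (a-b)^2 = 2*norm a^2 + 2*norm b^2"
  by (simp add: power2_norm_eq_inner inner_add_left inner_add_right inner_diff_left inner_diff_right inner_commute)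

lemma mid_bound:
  fixes x c1 c2 :: "'a::euclidean_space"
  assumes "dist c1 x \<le> r" "dist c2 x \<le> r"
  shows "norm (x - (1/2) *\<^sub>R (c1 + c2))^2 \<le> r^2 - (dist c1 c2)^2 / 4"
proof -
  define a where "a = x - c1"
  define b where "b = x - c2"
  have 1: "x - (1/2) *\<^sub>R (c1 + c2) = (1/2) *\<^sub>R (a + b)"
  proof -
    have h: "(1/2) *\<^sub>R x + (1/2) *\<^sub>R x = x"
      by (simp add: scaleR_add_left[symmetric])
    show ?thesis by (simp add: a_def b_def algebra_simps h)
  qed
  have 2: "a - b = c2 - c1" by (simp add: a_def b_def)
  have na: "norm a \<le> r" using assms(1) by (simp add: a_def dist_norm norm_minus_commute)
  have nb: "norm b \<le> r" using assms(2) by (simp add: b_def dist_norm norm_minus_commute)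
  have "norm a ^2 \<le> r^2" using na by (simp add: power_mono)
  moreover have "norm b ^2 \<le> r^2" using nb by (simp add: power_mono)
  moreover have "norm (a+b)^2 = 2*norm a^2 + 2*norm b^2 - (dist c1 c2)^2"
    using par_law[of a b] 2 by (simp add: dist_norm norm_minus_commute)
  ultimately have "norm (a+b)^2 \<le> 4*r^2 - (dist c1 c2)^2" by linarith
  moreover have "norm (x - (1/2) *\<^sub>R (c1 + c2))^2 = norm (a+b)^2 / 4"
    unfolding 1 by (simp add: power2_eq_square)
  ultimately show ?thesis by simp
qed

lemma min_ball_unique:
  fixes X :: "'a::euclidean_space set"
  assumes "x0 \<in> X" "X \<subseteq> cball c1 r" "X \<subseteq> cball c2 r"
    and minr: "\<And>c r'. X \<subseteq> cball c r' \<Longrightarrow> r \<le> r'"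
  shows "c1 = c2"
proof (rule ccontr)
  assume "c1 \<noteq> c2"
  then have d: "dist c1 c2 > 0" by simp
  define m where "m = (1/2) *\<^sub>R (c1 + c2)"
  define r' where "r' = sqrt (r^2 - (dist c1 c2)^2 / 4)"
  have mb: "\<And>x. x \<in> X \<Longrightarrow> norm (x - m)^2 \<le> r^2 - (dist c1 c2)^2 / 4"
  proof -
    fix x assume "x \<in> X"
    then have "dist c1 x \<le> r" "dist c2 x \<le> r" using assms(2,3) by auto
    then show "norm (x - m)^2 \<le> r^2 - (dist c1 c2)^2 / 4" unfolding m_def by (rule mid_bound)
  qed
  have r0: "0 \<le> r" using assms(1,2) by (rule cball_r_nonneg)
  have pos: "0 \<le> r^2 - (dist c1 c2)^2 / 4" using mb[OF assms(1)] zero_le_power2[of "norm (x0 - m)"] by linarith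
  have "X \<subseteq> cball m r'"
  proof
    fix x assume "x \<in> X"
    have "norm (x - m) \<le> r'" unfolding r'_def by (rule real_le_rsqrt[OF mb[OF \<open>x \<in> X\<close>]])
    then show "x \<in> cball m r'" by (simp add: dist_norm norm_minus_commute)
  qed
  then have "r \<le> r'" by (rule minr)
  moreover have "r' < r"
  proof -
    have "r^2 - (dist c1 c2)^2 / 4 < r^2" using d by simp
    then have "r' < sqrt (r^2)" unfolding r'_def using real_sqrt_less_iff by blast
    then show ?thesis using r0 by simp
  qed
  ultimately show False by simp
qed

lemma min_ball:
  fixes X :: "'a::euclidean_space set"
  assumes "X \<noteq> {}" "bounded X"
  shows "\<exists>c r. enclosing_ball X = cball c r \<and> X \<subseteq> cball c r \<and> 0 \<le> r \<and>
           (\<forall>c' r'. X \<subseteq> cball c' r' \<longrightarrow> r \<le> r')"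
proof -
  obtain x0 where x0: "x0 \<in> X" using assms(1) by blast
  define R where "R = {r. \<exists>c. X \<subseteq> cball c r}"
  define rs where "rs = Inf R"
  have Rne: "R \<noteq> {}"
  proof -
    obtain e c where "X \<subseteq> cball c e" using assms(2) unfolding bounded_subset_cball by blast
    then have "e \<in> R" unfolding R_def by blast
    then show ?thesis by blast
  qed
  have Rpos: "\<And>r. r \<in> R \<Longrightarrow> 0 \<le> r"
  proof -
    fix r assume "r \<in> R"
    then obtain c where "X \<subseteq> cball c r" unfolding R_def by blast
    then show "0 \<le> r" using x0 cball_r_nonneg by metis
  qed
  have bdd: "bdd_below R" by (rule bdd_belowI[of _ 0]) (rule Rpos)
  have rs0: "0 \<le> rs" unfolding rs_def by (rule cInf_greatest[OF Rne Rpos])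
  have rsle: "\<And>c r. X \<subseteq> cball c r \<Longrightarrow> rs \<le> r"
  proof -
    fix c r assume "X \<subseteq> cball c r"
    then have "r \<in> R" unfolding R_def by blast
    then show "rs \<le> r" unfolding rs_def using bdd by (rule cInf_lower)
  qed
  define F where "F = centers X ` {r. r > rs}"
  have mono_c: "\<And>r1 r2. r1 \<le> r2 \<Longrightarrow> centers X r1 \<subseteq> centers X r2"
    unfolding centers_def using cball_mono_sub by blast
  have "\<Inter>F \<noteq> {}"
  proof (rule chain_inter_nonempty)
    show "\<forall>A\<in>F. \<forall>B\<in>F. A \<subseteq> B \<or> B \<subseteq> A" unfolding F_def
    proof (intro ballI)
      fix A B assume "A \<in> centers X ` {r. r > rs}" "B \<in> centers X ` {r. r > rs}"
      then obtain r1 r2 where "A = centers X r1" "B = centers X r2" by blast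
      then show "A \<subseteq> B \<or> B \<subseteq> A" using mono_c[of r1 r2] mono_c[of r2 r1] by (cases "r1 \<le> r2") auto
    qed
    show "\<And>T. T \<in> F \<Longrightarrow> closed T" unfolding F_def using closed_centers by blast
    show "\<And>T. T \<in> F \<Longrightarrow> T \<noteq> {}"
    proof -
      fix T assume "T \<in> F"
      then obtain r where r: "r > rs" "T = centers X r" unfolding F_def by blast
      then obtain r' where "r' \<in> R" "r' < r" using cInf_less_iff[OF Rne bdd, of r] r(1) unfolding rs_def by blast
      then obtain c where "X \<subseteq> cball c r'" unfolding R_def by blast
      then have "c \<in> centers X r'" by (simp add: centers_def)
      then show "T \<noteq> {}" using mono_c[of r' r] \<open>r' < r\<close> r by auto
    qed
    show "centers X (rs+1) \<in> F" unfolding F_def by simp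
    show "bounded (centers X (rs+1))" using bounded_centers x0 by blast
  qed
  then obtain c0 where c0: "c0 \<in> \<Inter>F" by blast
  have c0X: "X \<subseteq> cball c0 rs"
  proof
    fix x assume "x \<in> X"
    have "dist c0 x \<le> r" if "r > rs" for r
    proof -
      have "c0 \<in> centers X r" using c0 that unfolding F_def by blast
      then show ?thesis using \<open>x \<in> X\<close> by (auto simp: centers_def)
    qed
    then have "dist c0 x \<le> rs" by (rule dense_ge)
    then show "x \<in> cball c0 rs" by simp
  qed
  have minr: "\<And>c r. X \<subseteq> cball c r \<Longrightarrow> rs \<le> r" by (rule rsle)
  define P where "P = (\<lambda>B. (\<exists>c r. B = cball c r) \<and> X \<subseteq> B \<and>
                   (\<forall>c r. X \<subseteq> cball c r \<longrightarrow> diameter B \<le> diameter (cball c r)))"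
  have Pc0: "P (cball c0 rs)"
    unfolding P_def
  proof (intro conjI allI impI)
    show "\<exists>c r. cball c0 rs = cball c r" by blast
    show "X \<subseteq> cball c0 rs" by (rule c0X)
    fix c r assume "X \<subseteq> cball c r"
    then have "rs \<le> r" by (rule minr)
    then show "diameter (cball c0 rs) \<le> diameter (cball c r)" using rs0 by simp
  qed
  have Puniq: "B = cball c0 rs" if "P B" for B
  proof -
    have PB: "(\<exists>c r. B = cball c r)" "X \<subseteq> B"
      "\<forall>c r. X \<subseteq> cball c r \<longrightarrow> diameter B \<le> diameter (cball c r)"
      using that unfolding P_def by simp_all
    from PB(1) obtain c r where B1: "B = cball c r" by blast
    have B2: "X \<subseteq> cball c r" using PB(2) B1 by simp
    have r0: "0 \<le> r" using x0 B2 by (rule cball_r_nonneg)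
    have "diameter B \<le> diameter (cball c0 rs)" using PB(3) c0X by blast
    then have "diameter (cball c r) \<le> diameter (cball c0 rs)" using B1 by simp
    then have "2*r \<le> 2*rs" using r0 rs0 by simp
    then have "r \<le> rs" by simp
    moreover have "rs \<le> r" using minr B2 by blast
    ultimately have rr: "r = rs" by simp
    then have B3: "X \<subseteq> cball c rs" using B2 by simp
    have "c = c0" by (rule min_ball_unique[OF x0 B3 c0X minr])
    then show ?thesis using B1 rr by simp
  qed
  have "enclosing_ball X = (if X = {} then {0} else if \<not> bounded X then UNIV else (THE B. P B))"
    unfolding enclosing_ball_def P_def by (rule refl)
  then have "enclosing_ball X = (THE B. P B)" using assms by simp
  also have "\<dots> = cball c0 rs" using Pc0 Puniq by (rule the_equality)
  finally show ?thesis using c0X rs0 minr by blast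
qed

lemma radius_le_iff:
  fixes X :: "'a::euclidean_space set"
  assumes "0 \<le> t"
  shows "ball_radius (enclosing_ball X) \<le> ereal t \<longleftrightarrow> (\<exists>c. X \<subseteq> cball c t)"
proof (cases "X = {}")
  case True
  have e0: "enclosing_ball X = {0}" by (simp add: enclosing_ball_def True)
  have "bounded {0::'a}" by simp
  then have "enclosing_ball X \<noteq> UNIV" using e0 not_bounded_UNIV by metis
  then show ?thesis using True assms by (simp add: ball_radius_def enclosing_ball_def)
next
  case ne: False
  show ?thesis
  proof (cases "bounded X")
    case False
    have "\<not> X \<subseteq> cball c t" for c using False bounded_cball bounded_subset by blast
    then show ?thesis using ne False by (simp add: ball_radius_def enclosing_ball_def)
  next
    case True
    from min_ball[OF ne True] obtain c r where cr: "enclosing_ball X = cball c r" "X \<subseteq> cball c r" "0 \<le> r"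
      "\<forall>c' r'. X \<subseteq> cball c' r' \<longrightarrow> r \<le> r'" by blast
    have "cball c r \<noteq> UNIV" using bounded_cball not_bounded_UNIV by metis
    then have rad: "ball_radius (enclosing_ball X) = ereal r"
      using cr by (simp add: ball_radius_def)
    show ?thesis
    proof
      assume "ball_radius (enclosing_ball X) \<le> ereal t"
      then have "r \<le> t" using rad by simp
      then have "X \<subseteq> cball c t" using cball_mono_sub[OF cr(2)] by blast
      then show "\<exists>c. X \<subseteq> cball c t" by blast
    next
      assume "\<exists>c. X \<subseteq> cball c t"
      then have "r \<le> t" using cr(4) by blast
      then show "ball_radius (enclosing_ball X) \<le> ereal t" using rad by simp
    qed
  qed
qed


lemma phi_level:
  fixes \<phi> :: "ennreal \<Rightarrow> ennreal"
  assumes Y: "young_function \<phi>"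
  shows "\<phi> s \<le> e \<longleftrightarrow> s \<le> Sup {s. \<phi> s \<le> e}"
proof -
  have mono: "mono \<phi>" and z: "\<phi> 0 = 0" and lc: "\<And>x. continuous (at_left x) \<phi>"
    using Y unfolding young_function_def by auto
  define a where "a = Sup {s. \<phi> s \<le> e}"
  have pa: "\<phi> a \<le> e"
  proof (cases "a = 0")
    case True then show ?thesis using z by simp
  next
    case False
    then have a0: "0 < a" using not_gr_zero by blast
    have lim: "(\<phi> \<longlongrightarrow> \<phi> a) (at_left a)" using lc[of a] by (simp add: continuous_within)
    have ev: "eventually (\<lambda>y. \<phi> y \<le> e) (at_left a)"
    proof -
      have "\<forall>y>0. y < a \<longrightarrow> \<phi> y \<le> e"
      proof (intro allI impI)
        fix y assume "y < a"
        then have "y < Sup {s. \<phi> s \<le> e}" unfolding a_def .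
        then obtain s where s0: "s \<in> {s. \<phi> s \<le> e}" "y < s" unfolding less_Sup_iff by blast
        then have s: "\<phi> s \<le> e" "y < s" by auto
        have "\<phi> y \<le> \<phi> s" using mono s(2) by (simp add: monoD)
        then show "\<phi> y \<le> e" using s(1) by simp
      qed
      then have "\<exists>b<a. \<forall>y>b. y < a \<longrightarrow> \<phi> y \<le> e" using a0 by blast
      then show ?thesis by (subst eventually_at_left[OF a0])
    qed
    have nt: "\<not> trivial_limit (at_left a)"
    proof
      assume "trivial_limit (at_left a)"
      then have "eventually (\<lambda>_. False) (at_left a)" by (simp add: trivial_limit_def)
      then have "\<exists>b<a. \<forall>y>b. y < a \<longrightarrow> False" by (subst (asm) eventually_at_left[OF a0])
      then obtain b where b: "b < a" "\<forall>y>b. y < a \<longrightarrow> False" by blast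
      obtain y where "b < y" "y < a" using dense[OF b(1)] by blast
      then show False using b(2) by blast
    qed
    show ?thesis by (rule tendsto_upperbound[OF lim ev nt])
  qed
  show ?thesis
  proof
    assume "\<phi> s \<le> e" then show "s \<le> Sup {s. \<phi> s \<le> e}" by (simp add: Sup_upper)
  next
    assume "s \<le> Sup {s. \<phi> s \<le> e}"
    then have "\<phi> s \<le> \<phi> a" using mono unfolding a_def by (rule monoD[rotated])
    then show "\<phi> s \<le> e" using pa by simp
  qed
qed

lemma S_char:
  fixes f :: "'a::euclidean_space \<Rightarrow> ennreal"
  assumes t0: "0 \<le> t"
    and P_def: "P = (\<lambda>\<xi>. \<exists>c. {x. \<xi> < enn2ereal (f x)} \<subseteq> cball c t)"
  shows "0 \<le> Inf {\<xi>. P \<xi>}" "\<And>\<xi>. P \<xi> \<longleftrightarrow> Inf {\<xi>. P \<xi>} \<le> \<xi>"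
proof -
  define g where "g = Inf {\<xi>. P \<xi>}"
  define L where "L = (\<lambda>\<xi>. {x. \<xi> < enn2ereal (f x)})"
  have PL: "\<And>\<xi>. P \<xi> \<longleftrightarrow> (\<exists>c. L \<xi> \<subseteq> cball c t)" unfolding P_def L_def by simp
  have Lmono: "\<And>\<xi>1 \<xi>2. \<xi>1 \<le> \<xi>2 \<Longrightarrow> L \<xi>2 \<subseteq> L \<xi>1" unfolding L_def by auto
  have Pmono: "\<And>\<xi>1 \<xi>2. \<xi>1 \<le> \<xi>2 \<Longrightarrow> P \<xi>1 \<Longrightarrow> P \<xi>2"
    unfolding PL using Lmono by blast
  have neg: "\<not> P \<xi>" if "\<xi> < 0" for \<xi>
  proof
    assume "P \<xi>"
    then obtain c where c: "L \<xi> \<subseteq> cball c t" unfolding PL by blast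
    have "L \<xi> = UNIV" unfolding L_def using that
      by (auto intro: less_le_trans[OF _ enn2ereal_nonneg])
    then have "bounded (UNIV :: 'a set)" using c bounded_cball bounded_subset by metis
    then show False by simp
  qed
  show g0: "0 \<le> Inf {\<xi>. P \<xi>}"
  proof (rule Inf_greatest)
    fix \<xi> assume "\<xi> \<in> {\<xi>. P \<xi>}"
    then show "0 \<le> \<xi>" using neg not_le by blast
  qed
  have gt: "P \<xi>" if "g < \<xi>" for \<xi>
  proof -
    have "Inf {\<xi>. P \<xi>} < \<xi>" using that unfolding g_def .
    then obtain \<xi>' where "\<xi>' \<in> {\<xi>. P \<xi>}" "\<xi>' < \<xi>" unfolding Inf_less_iff by blast
    then show ?thesis using Pmono[of \<xi>' \<xi>] by simp
  qed
  have Pg: "P g"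
  proof (cases "L g = {}")
    case True then show ?thesis unfolding PL by simp
  next
    case False
    then obtain y where y: "y \<in> L g" by blast
    then obtain z where z: "g < ereal z" "ereal z < enn2ereal (f y)"
      unfolding L_def using ereal_dense2 by blast
    define F where "F = (\<lambda>\<xi>. centers (L \<xi>) t) ` {\<xi>. g < \<xi>}"
    have "\<Inter>F \<noteq> {}"
    proof (rule chain_inter_nonempty)
      show "\<forall>A\<in>F. \<forall>B\<in>F. A \<subseteq> B \<or> B \<subseteq> A" unfolding F_def
      proof (intro ballI)
        fix A B assume "A \<in> (\<lambda>\<xi>. centers (L \<xi>) t) ` {\<xi>. g < \<xi>}" "B \<in> (\<lambda>\<xi>. centers (L \<xi>) t) ` {\<xi>. g < \<xi>}"
        then obtain r1 r2 where AB: "A = centers (L r1) t" "B = centers (L r2) t" by blast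
        have "r1 \<le> r2 \<Longrightarrow> A \<subseteq> B" unfolding AB centers_def using Lmono by blast
        moreover have "r2 \<le> r1 \<Longrightarrow> B \<subseteq> A" unfolding AB centers_def using Lmono by blast
        ultimately show "A \<subseteq> B \<or> B \<subseteq> A" by (cases "r1 \<le> r2") auto
      qed
      show "\<And>T. T \<in> F \<Longrightarrow> closed T" unfolding F_def using closed_centers by blast
      show "\<And>T. T \<in> F \<Longrightarrow> T \<noteq> {}"
      proof -
        fix T assume "T \<in> F"
        then obtain \<xi> where "g < \<xi>" "T = centers (L \<xi>) t" unfolding F_def by blast
        moreover obtain c where "L \<xi> \<subseteq> cball c t" using gt[OF \<open>g < \<xi>\<close>] unfolding PL by blast
        ultimately show "T \<noteq> {}" unfolding centers_def by blast
      qed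
      show "centers (L (ereal z)) t \<in> F" unfolding F_def using z(1) by blast
      have "y \<in> L (ereal z)" unfolding L_def using z(2) by simp
      then show "bounded (centers (L (ereal z)) t)" by (rule bounded_centers)
    qed
    then obtain c where c: "c \<in> \<Inter>F" by blast
    have "L g \<subseteq> cball c t"
    proof
      fix x assume "x \<in> L g"
      then obtain w where w: "g < ereal w" "ereal w < enn2ereal (f x)"
        unfolding L_def using ereal_dense2 by blast
      have "c \<in> centers (L (ereal w)) t" using c w(1) unfolding F_def by blast
      moreover have "x \<in> L (ereal w)" unfolding L_def using w(2) by simp
      ultimately show "x \<in> cball c t" unfolding centers_def by blast
    qed
    then show ?thesis unfolding PL by blast
  qed
  show "P \<xi> \<longleftrightarrow> Inf {\<xi>. P \<xi>} \<le> \<xi>" for \<xi>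
  proof
    assume "P \<xi>" then show "Inf {\<xi>. P \<xi>} \<le> \<xi>" by (simp add: Inf_lower)
  next
    assume "Inf {\<xi>. P \<xi>} \<le> \<xi>"
    then have "g \<le> \<xi>" unfolding g_def .
    then show "P \<xi>"
    proof (cases "g = \<xi>")
      case True then show ?thesis using Pg by simp
    next
      case False then show ?thesis using gt \<open>g \<le> \<xi>\<close> by simp
    qed
  qed
qed

lemma gamma_eq:
  fixes F :: "'a::euclidean_space \<Rightarrow> ereal"
  assumes "0 \<le> t"
  shows "gamma_plus F t = Inf {\<xi>. \<exists>c. {x. \<xi> < F x} \<subseteq> cball c t}"
  unfolding gamma_plus_def rho_plus_def by (simp add: radius_le_iff[OF assms])

theorem lemma16:
  fixes \<phi> :: "ennreal \<Rightarrow> ennreal" and f :: "'a::euclidean_space \<Rightarrow> ennreal"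
  assumes "young_function \<phi>"
  shows "sym_hat (\<lambda>x. enn2ereal (\<phi> (f x)))
           = (\<lambda>x. enn2ereal (\<phi> (e2ennreal (sym_hat (\<lambda>y. enn2ereal (f y)) x))))"
proof
  fix x :: 'a
  define t where "t = norm x"
  have t0: "0 \<le> t" unfolding t_def by simp
  define P where "P = (\<lambda>\<xi>. \<exists>c. {x. \<xi> < enn2ereal (f x)} \<subseteq> cball c t)"
  define Q where "Q = (\<lambda>\<xi>. \<exists>c. {x. \<xi> < enn2ereal (\<phi> (f x))} \<subseteq> cball c t)"
  define g where "g = Inf {\<xi>. P \<xi>}"
  have g0: "0 \<le> g" unfolding g_def by (rule S_char(1)[OF t0 P_def])
  have Pc: "\<And>\<xi>. P \<xi> \<longleftrightarrow> g \<le> \<xi>" unfolding g_def by (rule S_char(2)[OF t0 P_def])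
  have hf: "sym_hat (\<lambda>y. enn2ereal (f y)) x = g"
    unfolding sym_hat_def g_def P_def t_def[symmetric] gamma_eq[OF t0] by simp
  have hphi: "sym_hat (\<lambda>x. enn2ereal (\<phi> (f x))) x = Inf {\<xi>. Q \<xi>}"
    unfolding sym_hat_def Q_def t_def[symmetric] gamma_eq[OF t0] by simp
  define cv where "cv = enn2ereal (\<phi> (e2ennreal g))"
  have Qc: "Q \<eta> \<longleftrightarrow> cv \<le> \<eta>" for \<eta>
  proof (cases "\<eta> < 0")
    case True
    have "\<not> Q \<eta>"
    proof
      assume "Q \<eta>"
      then obtain c where c: "{x. \<eta> < enn2ereal (\<phi> (f x))} \<subseteq> cball c t" unfolding Q_def by blast
      have "{x. \<eta> < enn2ereal (\<phi> (f x))} = UNIV" using True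
        by (auto intro: less_le_trans[OF _ enn2ereal_nonneg])
      then have "bounded (UNIV :: 'a set)" using c bounded_cball bounded_subset by metis
      then show False by simp
    qed
    moreover have "\<not> cv \<le> \<eta>" using True enn2ereal_nonneg[of "\<phi> (e2ennreal g)"] unfolding cv_def by (meson not_le order_less_le_trans)
    ultimately show ?thesis by simp
  next
    case False
    then have h0: "0 \<le> \<eta>" by simp
    define e where "e = e2ennreal \<eta>"
    have he: "\<eta> = enn2ereal e" unfolding e_def using enn2ereal_e2ennreal[OF h0] by simp
    define a where "a = Sup {s. \<phi> s \<le> e}"
    have lev: "{x. \<eta> < enn2ereal (\<phi> (f x))} = {x. enn2ereal a < enn2ereal (f x)}"
    proof -
      have "\<eta> < enn2ereal (\<phi> z) \<longleftrightarrow> enn2ereal a < enn2ereal z" for z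
      proof -
        have "\<eta> < enn2ereal (\<phi> z) \<longleftrightarrow> e < \<phi> z" unfolding he by (simp add: less_ennreal.rep_eq)
        also have "\<dots> \<longleftrightarrow> \<not> \<phi> z \<le> e" by (simp add: not_le)
        also have "\<dots> \<longleftrightarrow> \<not> z \<le> a" unfolding a_def using phi_level[OF assms, of z e] by blast
        also have "\<dots> \<longleftrightarrow> enn2ereal a < enn2ereal z" by (simp add: not_le less_ennreal.rep_eq)
        finally show ?thesis .
      qed
      then show ?thesis by simp
    qed
    have "Q \<eta> \<longleftrightarrow> P (enn2ereal a)" unfolding Q_def P_def lev by simp
    also have "\<dots> \<longleftrightarrow> g \<le> enn2ereal a" by (rule Pc)
    also have "\<dots> \<longleftrightarrow> e2ennreal g \<le> a"
    proof -
      have "g = enn2ereal (e2ennreal g)" using enn2ereal_e2ennreal[OF g0] by simp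
      then show ?thesis by (metis less_eq_ennreal.rep_eq)
    qed
    also have "\<dots> \<longleftrightarrow> \<phi> (e2ennreal g) \<le> e" unfolding a_def using phi_level[OF assms, of "e2ennreal g" e] by blast
    also have "\<dots> \<longleftrightarrow> cv \<le> \<eta>" unfolding cv_def he by (simp add: less_eq_ennreal.rep_eq)
    finally show ?thesis .
  qed
  have "{\<xi>. Q \<xi>} = {cv..}" using Qc by auto
  then have "Inf {\<xi>. Q \<xi>} = cv" by simp
  then show "sym_hat (\<lambda>x. enn2ereal (\<phi> (f x))) x
           = enn2ereal (\<phi> (e2ennreal (sym_hat (\<lambda>y. enn2ereal (f y)) x)))"
    using hphi hf unfolding cv_def by simp
qed

end
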